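(* The rule MaxHam satisfies antipodal strategyproofness and participation.
   Context: An agenda is a finite nonempty list $\Phi=(\phi_1,\dots,\phi_m)$ of propositional formulas; a judgment is $J\in\{0,1\}^m$; the antipodal judgment $\overline{J}$ accepts exactly the issues rejected by $J$. $\mathcal{J}(\Phi)\subseteq\{0,1\}^m$ is the nonempty set of admissible judgments. A profile for a finite set of agents $N$ is $\mathbf{P}=(J_1,\dots,J_n)\in\mathcal{J}(\Phi)^n$; $\mathbf{P}_{-i}$ removes agent $i$, $(\mathbf{P}_{-i},J)$ replaces $i$'s judgment by $J$. Hamming distance $H(J,J')=\sum_k|J(\phi_k)-J'(\phi_k)|$. $\mathrm{MaxHam}(\mathbf{P})=\arg\min_{J\in\mathcal{J}(\Phi)}\max_{i\in N}H(J_i,J)$. Agent $i$ with truthful $J_i$: $J\succeq_i J'$ iff $H(J_i,J)\le H(J_i,J')$. Set preferences $\mathrel{\mathring{\succeq}}_i$ (strict part $\mathrel{\mathring{\succ}}_i$) satisfy (R1) $J\succeq_i J'$ iff $\{J\}\mathrel{\mathring{\succeq}}_i\{J'\}$, and (R2) $X\mathrel{\mathring{\succ}}_i Y$ implies there exist $J\in X$, $J'\in Y$ with $J\succ_i J'$ and $\{J,J'\}\not\subseteq X\cap Y$. Participation: no $\mathbf{P}$, $i$ with $F(\mathbf{P}_{-i})\mathrel{\mathring{\succ}}_i F(\mathbf{P})$. Antipodal strategyproofness: no $\mathbf{P}$, $i$ with $F(\mathbf{P}_{-i},\overline{J_i})\mathrel{\mathring{\succ}}_i F(\mathbf{P})$.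 *)

theory Defs
  imports Main
begin

text \<open>Judgments over an agenda of m issues are boolean lists of length m
  (entry k = acceptance of issue k). The admissible set J(Phi) is an arbitrary
  nonempty set of such lists.\<close>

type_synonym jdg = "bool list"

definition judgments :: "nat \<Rightarrow> jdg set" where
  "judgments m = {J. length J = m}"

definition antipodal :: "jdg \<Rightarrow> jdg" where
  "antipodal J = map Not J"

definition hamming :: "nat \<Rightarrow> jdg \<Rightarrow> jdg \<Rightarrow> nat" where
  "hamming m J J' = card {k. k < m \<and> J ! k \<noteq> J' ! k}"

definition is_profile :: "jdg set \<Rightarrow> 'a set \<Rightarrow> ('a \<Rightarrow> jdg) \<Rightarrow> bool" where
  "is_profile Adm N P \<longleftrightarrow> finite N \<and> (\<forall>i\<in>N. P i \<in> Adm)"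

text \<open>Maximal distance of J to the judgments of the agents in N
  (0 for the empty agent set, via Sup on nat).\<close>
definition maxdist :: "nat \<Rightarrow> 'a set \<Rightarrow> ('a \<Rightarrow> jdg) \<Rightarrow> jdg \<Rightarrow> nat" where
  "maxdist m N P J = Sup ((\<lambda>i. hamming m (P i) J) ` N)"

definition MaxHam :: "nat \<Rightarrow> jdg set \<Rightarrow> 'a set \<Rightarrow> ('a \<Rightarrow> jdg) \<Rightarrow> jdg set" where
  "MaxHam m Adm N P = {J \<in> Adm. \<forall>J'\<in>Adm. maxdist m N P J \<le> maxdist m N P J'}"

definition strict_part :: "('b \<Rightarrow> 'b \<Rightarrow> bool) \<Rightarrow> 'b \<Rightarrow> 'b \<Rightarrow> bool" where
  "strict_part R x y \<longleftrightarrow> R x y \<and> \<not> R y x"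

definition set_extension :: "nat \<Rightarrow> jdg \<Rightarrow> (jdg set \<Rightarrow> jdg set \<Rightarrow> bool) \<Rightarrow> bool" where
  "set_extension m Ji R \<longleftrightarrow>
     (\<forall>J\<in>judgments m. \<forall>J'\<in>judgments m.
        hamming m Ji J \<le> hamming m Ji J' \<longleftrightarrow> R {J} {J'}) \<and>
     (\<forall>X Y. X \<subseteq> judgments m \<longrightarrow> Y \<subseteq> judgments m \<longrightarrow> strict_part R X Y \<longrightarrow>
        (\<exists>J\<in>X. \<exists>J'\<in>Y. hamming m Ji J < hamming m Ji J' \<and> \<not> {J, J'} \<subseteq> X \<inter> Y))"


definition participation :: "nat \<Rightarrow> jdg set \<Rightarrow> ('a set \<Rightarrow> ('a \<Rightarrow> jdg) \<Rightarrow> jdg set) \<Rightarrow> bool" where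
  "participation m Adm F \<longleftrightarrow>
     (\<forall>N P i R. is_profile Adm N P \<longrightarrow> i \<in> N \<longrightarrow> set_extension m (P i) R \<longrightarrow>
        \<not> strict_part R (F (N - {i}) P) (F N P))"

definition antipodal_strategyproof :: "nat \<Rightarrow> jdg set \<Rightarrow> ('a set \<Rightarrow> ('a \<Rightarrow> jdg) \<Rightarrow> jdg set) \<Rightarrow> bool" where
  "antipodal_strategyproof m Adm F \<longleftrightarrow>
     (\<forall>N P i R. is_profile Adm N P \<longrightarrow> i \<in> N \<longrightarrow> antipodal (P i) \<in> Adm \<longrightarrow>
        set_extension m (P i) R \<longrightarrow>
        \<not> strict_part R (F N (P(i := antipodal (P i)))) (F N P))"

end

theory Submission
  imports Defs
begin

lemma Sup_insert_nat: "finite (A::nat set) \<Longrightarrow> Sup (insert x A) = max x (Sup A)"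
  by (cases "A = {}") (auto simp: Sup_nat_def Max_insert max_def)

lemma maxdist_split:
  assumes "finite N" "i \<in> N"
  shows "maxdist m N P J = max (maxdist m (N-{i}) P J) (hamming m (P i) J)"
proof -
  have "N = insert i (N-{i})" using assms by auto
  then have "(\<lambda>i. hamming m (P i) J) ` N = insert (hamming m (P i) J) ((\<lambda>i. hamming m (P i) J) ` (N-{i}))"
    by (metis image_insert)
  then show ?thesis unfolding maxdist_def using assms
    by (simp add: Sup_insert_nat max.commute)
qed

lemma maxdist_upd: "maxdist m (N-{i}) (P(i:=x)) J = maxdist m (N-{i}) P J"
  unfolding maxdist_def by (rule arg_cong[where f=Sup]) auto

lemma hamming_anti:
  assumes "length Ji = m"
  shows "hamming m (antipodal Ji) J = m - hamming m Ji J"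
proof -
  have "{k. k < m \<and> antipodal Ji ! k \<noteq> J ! k} = {..<m} - {k. k < m \<and> Ji ! k \<noteq> J ! k}"
    using assms by (auto simp: antipodal_def)
  moreover have "{k. k < m \<and> Ji ! k \<noteq> J ! k} \<subseteq> {..<m}" by auto
  ultimately show ?thesis unfolding hamming_def
    by (metis card_Diff_subset card_lessThan finite_subset finite_lessThan)
qed

lemma hamming_le: "hamming m Ji J \<le> m"
proof -
  have "{k. k < m \<and> Ji ! k \<noteq> J ! k} \<subseteq> {..<m}" by auto
  then show ?thesis unfolding hamming_def by (metis card_lessThan card_mono finite_lessThan)
qed

lemma abs_part:
  fixes a h :: "jdg \<Rightarrow> nat"
  assumes X: "J \<in> Adm" "\<forall>K\<in>Adm. a J \<le> a K"
    and Y: "J' \<in> Adm" "\<forall>K\<in>Adm. max (a J') (h J') \<le> max (a K) (h K)"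
    and lt: "h J < h J'"
  shows "(\<forall>K\<in>Adm. max (a J) (h J) \<le> max (a K) (h K)) \<and> (\<forall>K\<in>Adm. a J' \<le> a K)"
proof -
  have "a J \<le> a J'" using X Y by auto
  then have 1: "max (a J) (h J) \<le> max (a J') (h J')" using lt by auto
  then have "max (a J') (h J') \<le> max (a J) (h J)" using Y X by auto
  then have "a J' \<le> a J" using lt by auto
  then show ?thesis using 1 X Y by (meson order_trans)
qed

lemma abs_anti:
  fixes a h :: "jdg \<Rightarrow> nat"
  assumes hm: "\<And>K. h K \<le> m"
    and X: "J \<in> Adm" "\<forall>K\<in>Adm. max (a J) (m - h J) \<le> max (a K) (m - h K)"
    and Y: "J' \<in> Adm" "\<forall>K\<in>Adm. max (a J') (h J') \<le> max (a K) (h K)"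
    and lt: "h J < h J'"
  shows "(\<forall>K\<in>Adm. max (a J) (h J) \<le> max (a K) (h K)) \<and>
         (\<forall>K\<in>Adm. max (a J') (m - h J') \<le> max (a K) (m - h K))"
proof -
  have x1: "max (a J) (m - h J) \<le> max (a J') (m - h J')" using X Y by auto
  have y1: "max (a J') (h J') \<le> max (a J) (h J)" using X Y by auto
  have "m - h J' < m - h J" using lt hm[of J'] by linarith
  then have "m - h J < max (a J) (m - h J) \<or> m - h J' < max (a J) (m - h J)" by auto
  from x1 `m - h J' < m - h J` have A: "a J \<le> a J'" "m - h J' < a J'" by auto
  from y1 lt have B: "a J' \<le> a J" by auto
  have eq1: "max (a J) (h J) = max (a J') (h J')" using A B y1 lt by auto
  have eq2: "max (a J') (m - h J') = max (a J) (m - h J)" using A B x1 by auto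
  show ?thesis using eq1 eq2 X Y by auto
qed

theorem corollary1:
  fixes m :: nat and Adm :: "jdg set"
  assumes "0 < m" and "Adm \<noteq> {}" and "Adm \<subseteq> judgments m"
  shows "antipodal_strategyproof m Adm (MaxHam m Adm :: 'a set \<Rightarrow> ('a \<Rightarrow> jdg) \<Rightarrow> jdg set) \<and>
         participation m Adm (MaxHam m Adm :: 'a set \<Rightarrow> ('a \<Rightarrow> jdg) \<Rightarrow> jdg set)"
proof
  show "antipodal_strategyproof m Adm (MaxHam m Adm :: 'a set \<Rightarrow> ('a \<Rightarrow> jdg) \<Rightarrow> jdg set)"
    unfolding antipodal_strategyproof_def
  proof (intro allI impI notI)
    fix N :: "'a set" and P i R
    assume prof: "is_profile Adm N P" and iN: "i \<in> N" and aA: "antipodal (P i) \<in> Adm"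
      and se: "set_extension m (P i) R"
      and sp: "strict_part R (MaxHam m Adm N (P(i := antipodal (P i)))) (MaxHam m Adm N P)"
    have fin: "finite N" using prof by (simp add: is_profile_def)
    have len: "length (P i) = m" using prof iN assms(3) by (auto simp: is_profile_def judgments_def)
    define a where "a = maxdist m (N-{i}) P"
    define h where "h = hamming m (P i)"
    have md1: "\<And>J. maxdist m N P J = max (a J) (h J)"
      using maxdist_split[OF fin iN] by (simp add: a_def h_def)
    have md2: "\<And>J. maxdist m N (P(i := antipodal (P i))) J = max (a J) (m - h J)"
      using maxdist_split[OF fin iN, of m "P(i := antipodal (P i))"]
      by (simp add: a_def h_def maxdist_upd hamming_anti[OF len])
    have sub: "MaxHam m Adm N Q \<subseteq> judgments m" for Q :: "'a \<Rightarrow> jdg"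
      using assms(3) by (auto simp: MaxHam_def)
    obtain J J' where J: "J \<in> MaxHam m Adm N (P(i := antipodal (P i)))"
      and J': "J' \<in> MaxHam m Adm N P" and lt: "h J < h J'"
      and nb: "\<not> {J, J'} \<subseteq> MaxHam m Adm N (P(i := antipodal (P i))) \<inter> MaxHam m Adm N P"
      using conjunct2[OF se[unfolded set_extension_def], rule_format, OF sub sub sp]
      unfolding h_def by blast
    have "(\<forall>K\<in>Adm. max (a J) (h J) \<le> max (a K) (h K)) \<and>
         (\<forall>K\<in>Adm. max (a J') (m - h J') \<le> max (a K) (m - h K))"
      apply (rule abs_anti[where J=J and J'=J' and Adm=Adm])
      using J J' lt hamming_le by (auto simp: MaxHam_def md1 md2 h_def)
    then show False using nb J J' by (auto simp: MaxHam_def md1 md2)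
  qed
  show "participation m Adm (MaxHam m Adm :: 'a set \<Rightarrow> ('a \<Rightarrow> jdg) \<Rightarrow> jdg set)"
    unfolding participation_def
  proof (intro allI impI notI)
    fix N :: "'a set" and P i R
    assume prof: "is_profile Adm N P" and iN: "i \<in> N"
      and se: "set_extension m (P i) R"
      and sp: "strict_part R (MaxHam m Adm (N - {i}) P) (MaxHam m Adm N P)"
    have fin: "finite N" using prof by (simp add: is_profile_def)
    define a where "a = maxdist m (N-{i}) P"
    define h where "h = hamming m (P i)"
    have md1: "\<And>J. maxdist m N P J = max (a J) (h J)"
      using maxdist_split[OF fin iN] by (simp add: a_def h_def)
    have sub: "MaxHam m Adm M Q \<subseteq> judgments m" for M and Q :: "'a \<Rightarrow> jdg"
      using assms(3) by (auto simp: MaxHam_def)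
    obtain J J' where J: "J \<in> MaxHam m Adm (N - {i}) P"
      and J': "J' \<in> MaxHam m Adm N P" and lt: "h J < h J'"
      and nb: "\<not> {J, J'} \<subseteq> MaxHam m Adm (N - {i}) P \<inter> MaxHam m Adm N P"
      using conjunct2[OF se[unfolded set_extension_def], rule_format, OF sub sub sp]
      unfolding h_def by blast
    have "(\<forall>K\<in>Adm. max (a J) (h J) \<le> max (a K) (h K)) \<and> (\<forall>K\<in>Adm. a J' \<le> a K)"
      apply (rule abs_part[where J=J and J'=J' and Adm=Adm])
      using J J' lt by (auto simp: MaxHam_def md1 a_def)
    then show False using nb J J' by (auto simp: MaxHam_def md1 a_def)
  qed
qed

end
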